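(* Let $U\in\mathbb{R}^{n\times d}$, let $\mathbf{x}_*\in\mathbb{R}^d$ be $s$-sparse and $\mathbf{y}=U\mathbf{x}_*$ (noiseless, $\mathbf{e}=0$). Let $\mathbf{x}_t$ be an iterate of Algorithm 1 and $\mathbf{x}_{t+1}$ the next iterate; let $\mathcal{S}_t,\mathcal{S}_{t+1},\mathcal{S}_*$ be the supports of $\mathbf{x}_t,\mathbf{x}_{t+1},\mathbf{x}_*$. If $|\mathcal{S}_t\setminus\mathcal{S}_*|\le s$ and $\lambda_t\ge\frac{\delta_s+\sqrt2\theta_{s,s}}{\sqrt s}\|\mathbf{x}_t-\mathbf{x}_*\|_2$, then $|\mathcal{S}_{t+1}\setminus\mathcal{S}_*|\le s$ and $|\mathcal{S}_*\cup\mathcal{S}_t\cup\mathcal{S}_{t+1}|\le3s$.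
   Context: $U_{\mathcal T}$ is the column submatrix of $U$ indexed by $\mathcal T$. $\delta_s$ is the smallest constant $\ge0$ with $(1-\delta_s)\|\mathbf{v}\|_2^2\le\|U_{\mathcal T}\mathbf{v}\|_2^2\le(1+\delta_s)\|\mathbf{v}\|_2^2$ for all $|\mathcal T|\le s$, $\mathbf{v}\in\mathbb{R}^{|\mathcal T|}$; $\theta_{s,s}$ (with $2s\le d$) is the smallest constant with $|\langle U_{\mathcal T}\mathbf{v},U_{\mathcal T'}\mathbf{v}'\rangle|\le\theta_{s,s}\|\mathbf{v}\|_2\|\mathbf{v}'\|_2$ for all disjoint $\mathcal T,\mathcal T'$ of size at most $s$. Algorithm 1: $\mathbf{x}_1=0$ and $\mathbf{x}_{t+1}=\mathrm{sign}(\widehat{\mathbf{x}}_t)[|\widehat{\mathbf{x}}_t|-\lambda_t]_+$ with $\widehat{\mathbf{x}}_t=\mathbf{x}_t-U^\top(U\mathbf{x}_t-\mathbf{y})$ (componentwise), for parameters $\lambda_t>0$. *)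

theory Defs
  imports "HOL-Analysis.Analysis"
begin

text \<open>Vectors in R^d are \<open>real ^ 'd\<close>, an n x d matrix is \<open>real ^ 'd ^ 'n\<close>.
  \<open>U *v x\<close> with x supported on T equals the column submatrix U_T applied to the
  restriction of x to T.\<close>

definition supp_vec :: "real ^ 'd \<Rightarrow> 'd set" where
  "supp_vec x = {i. x $ i \<noteq> 0}"

definition rip_const :: "real ^ 'd ^ 'n \<Rightarrow> nat \<Rightarrow> real" where
  "rip_const U s = Inf {\<delta>. \<delta> \<ge> 0 \<and>
     (\<forall>T v. card T \<le> s \<longrightarrow> supp_vec v \<subseteq> T \<longrightarrow>
        (1 - \<delta>) * (norm v)\<^sup>2 \<le> (norm (U *v v))\<^sup>2 \<and>
        (norm (U *v v))\<^sup>2 \<le> (1 + \<delta>) * (norm v)\<^sup>2)}"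

definition rop_const :: "real ^ 'd ^ 'n \<Rightarrow> nat \<Rightarrow> real" where
  "rop_const U s = Inf {\<theta>. \<theta> \<ge> 0 \<and>
     (\<forall>T T' v v'. card T \<le> s \<longrightarrow> card T' \<le> s \<longrightarrow> T \<inter> T' = {} \<longrightarrow>
        supp_vec v \<subseteq> T \<longrightarrow> supp_vec v' \<subseteq> T' \<longrightarrow>
        \<bar>(U *v v) \<bullet> (U *v v')\<bar> \<le> \<theta> * norm v * norm v')}"

definition alg_step :: "real ^ 'd ^ 'n \<Rightarrow> real ^ 'n \<Rightarrow> real \<Rightarrow> real ^ 'd \<Rightarrow> real ^ 'd" where
  "alg_step U y lam x =
     (let xh = x - transpose U *v (U *v x - y)
      in \<chi> i. sgn (xh $ i) * max (\<bar>xh $ i\<bar> - lam) 0)"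

end

theory Submission
  imports Defs
begin

lemma U_bound: "\<exists>K>0. \<forall>v. norm ((U::real^'d^'n) *v v) \<le> norm v * K"
  using bounded_linear.pos_bounded[OF matrix_vector_mul_bounded_linear[of U]] by blast

lemma rip_prop:
  fixes U :: "real^'d^'n"
  shows   "rip_const U s \<ge> 0 \<and> (\<forall>T v. card T \<le> s \<longrightarrow> supp_vec v \<subseteq> T \<longrightarrow>
        (1 - rip_const U s) * (norm v)\<^sup>2 \<le> (norm (U *v v))\<^sup>2 \<and>
        (norm (U *v v))\<^sup>2 \<le> (1 + rip_const U s) * (norm v)\<^sup>2)"
proof -
  let ?S = "{\<delta>. \<delta> \<ge> 0 \<and>
     (\<forall>T v. card T \<le> s \<longrightarrow> supp_vec v \<subseteq> T \<longrightarrow>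
        (1 - \<delta>) * (norm v)\<^sup>2 \<le> (norm (U *v v))\<^sup>2 \<and>
        (norm (U *v v))\<^sup>2 \<le> (1 + \<delta>) * (norm v)\<^sup>2)}"
  obtain K where K: "K > 0" "\<And>v. norm (U *v v) \<le> norm v * K" using U_bound by blast
  have "max 1 (K^2) \<in> ?S"
  proof (simp only: mem_Collect_eq, intro conjI allI impI)
    show "0 \<le> max 1 (K^2)" by simp
  next
    fix T and v :: "real^'d"
    show "(1 - max 1 (K\<^sup>2)) * (norm v)\<^sup>2 \<le> (norm (U *v v))\<^sup>2"
      by (smt (verit) mult_nonpos_nonneg zero_le_power2)
  next
    fix T and v :: "real^'d"
    have "(norm (U *v v))\<^sup>2 \<le> (norm v * K)^2"
      using K(2)[of v] by (simp add: power_mono)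
    also have "\<dots> \<le> (1 + max 1 (K\<^sup>2)) * (norm v)\<^sup>2"
      proof -
      have "K^2 \<le> 1 + max 1 (K\<^sup>2)" by simp
      from mult_right_mono[OF this zero_le_power2[of "norm v"]] show ?thesis by (simp add: mult.commute power_mult_distrib)
    qed
    finally show "(norm (U *v v))\<^sup>2 \<le> (1 + max 1 (K\<^sup>2)) * (norm v)\<^sup>2" .
  qed
  hence ne: "?S \<noteq> {}" by blast
  have bdd: "bdd_below ?S" by (rule bdd_belowI[of _ 0]) auto
  have cl: "closed ?S"
    by (intro closed_Collect_conj closed_Collect_all closed_Collect_imp closed_Collect_le
        open_Collect_const continuous_intros)
  have "Inf ?S \<in> ?S" by (rule closed_contains_Inf[OF ne bdd cl])
  thus ?thesis unfolding rip_const_def by simp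
qed

lemma rop_prop:
  fixes U :: "real^'d^'n"
  shows   "rop_const U s \<ge> 0 \<and> (\<forall>T T' v v'. card T \<le> s \<longrightarrow> card T' \<le> s \<longrightarrow> T \<inter> T' = {} \<longrightarrow>
        supp_vec v \<subseteq> T \<longrightarrow> supp_vec v' \<subseteq> T' \<longrightarrow>
        \<bar>(U *v v) \<bullet> (U *v v')\<bar> \<le> rop_const U s * norm v * norm v')"
proof -
  let ?S = "{\<theta>. \<theta> \<ge> 0 \<and>
     (\<forall>T T' v v'. card T \<le> s \<longrightarrow> card T' \<le> s \<longrightarrow> T \<inter> T' = {} \<longrightarrow>
        supp_vec v \<subseteq> T \<longrightarrow> supp_vec v' \<subseteq> T' \<longrightarrow>
        \<bar>(U *v v) \<bullet> (U *v v')\<bar> \<le> \<theta> * norm v * norm v')}"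
  obtain K where K: "K > 0" "\<And>v. norm (U *v v) \<le> norm v * K" using U_bound by blast
  have "K^2 \<in> ?S"
  proof (simp only: mem_Collect_eq, intro conjI allI impI)
    show "0 \<le> K^2" by simp
  next
    fix T T' :: "'d set" and v v' :: "real^'d"
    have "\<bar>(U *v v) \<bullet> (U *v v')\<bar> \<le> norm (U *v v) * norm (U *v v')"
      by (rule Cauchy_Schwarz_ineq2)
    also have "\<dots> \<le> (norm v * K) * (norm v' * K)"
      using K by (intro mult_mono) auto
    finally show "\<bar>(U *v v) \<bullet> (U *v v')\<bar> \<le> K\<^sup>2 * norm v * norm v'"
      by (simp add: power2_eq_square algebra_simps)
  qed
  hence ne: "?S \<noteq> {}" by blast
  have bdd: "bdd_below ?S" by (rule bdd_belowI[of _ 0]) auto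
  have cl: "closed ?S"
    by (intro closed_Collect_conj closed_Collect_all closed_Collect_imp closed_Collect_le
        open_Collect_const continuous_intros)
  have "Inf ?S \<in> ?S" by (rule closed_contains_Inf[OF ne bdd cl])
  thus ?thesis unfolding rop_const_def by simp
qed

lemma Uadd: "(U::real^'d^'n) *v (a + b) = U *v a + U *v b"
  using linear_add[OF matrix_vector_mul_linear[of U]] by simp
lemma Udiff: "(U::real^'d^'n) *v (a - b) = U *v a - U *v b"
  using linear_diff[OF matrix_vector_mul_linear[of U]] by simp
lemma Uscale: "(U::real^'d^'n) *v (c *\<^sub>R a) = c *\<^sub>R (U *v a)"
  using linear_scale[OF matrix_vector_mul_linear[of U]] by simp

definition rs :: "'d set \<Rightarrow> real^'d \<Rightarrow> real^'d" where
  "rs A w = (\<chi> i. if i \<in> A then w$i else 0)"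

lemma supp_rs: "supp_vec (rs A w) \<subseteq> A"
  by (auto simp: supp_vec_def rs_def)
lemma supp_rs2: "supp_vec (rs A w) \<subseteq> supp_vec w"
  by (auto simp: supp_vec_def rs_def)
lemma supp_add: "supp_vec (u + w) \<subseteq> supp_vec u \<union> supp_vec w"
  by (auto simp: supp_vec_def)
lemma supp_diff: "supp_vec (u - w) \<subseteq> supp_vec u \<union> supp_vec w"
  by (auto simp: supp_vec_def)
lemma supp_scale: "supp_vec (c *\<^sub>R u) \<subseteq> supp_vec u"
  by (auto simp: supp_vec_def)
lemma inner_disj: "supp_vec u \<inter> supp_vec w = {} \<Longrightarrow> u \<bullet> w = 0"
  unfolding inner_vec_def supp_vec_def
  by (rule sum.neutral) (auto simp: disjoint_iff)
lemma rs_split: "rs A w + rs (-A) w = w"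
  by (simp add: rs_def vec_eq_iff)
lemma norm_rs_le: "norm (rs A w) \<le> norm w"
proof -
  have "rs A w \<bullet> rs A w \<le> w \<bullet> w"
    unfolding inner_vec_def rs_def by (intro sum_mono) auto
  thus ?thesis by (simp add: norm_le)
qed

lemma rip_inner:
  fixes U :: "real^'d^'n"
  assumes A: "card A \<le> s" and su: "supp_vec u \<subseteq> A" and su': "supp_vec u' \<subseteq> A"
  shows "\<bar>u \<bullet> u' - (U *v u) \<bullet> (U *v u')\<bar> \<le> rip_const U s * norm u * norm u'"
proof -
  define \<delta> where "\<delta> = rip_const U s"
  have P: "\<And>v. supp_vec v \<subseteq> A \<Longrightarrow> (1 - \<delta>) * (norm v)\<^sup>2 \<le> (norm (U *v v))\<^sup>2 \<and>
        (norm (U *v v))\<^sup>2 \<le> (1 + \<delta>) * (norm v)\<^sup>2"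
    using rip_prop[of U s] A unfolding \<delta>_def by blast
  have key: "\<bar>p \<bullet> q - (U *v p) \<bullet> (U *v q)\<bar> \<le> \<delta> * ((norm p)\<^sup>2 + (norm q)\<^sup>2) / 2"
    if sp: "supp_vec p \<subseteq> A" and sq: "supp_vec q \<subseteq> A" for p q
  proof -
    have s1: "supp_vec (p + q) \<subseteq> A" using supp_add[of p q] sp sq by blast
    have s2: "supp_vec (p - q) \<subseteq> A" using supp_diff[of p q] sp sq by blast
    have e1: "(norm (p+q))\<^sup>2 = p\<bullet>p + 2*(p\<bullet>q) + q\<bullet>q"
      by (simp add: power2_norm_eq_inner inner_add inner_commute)
    have e2: "(norm (p-q))\<^sup>2 = p\<bullet>p - 2*(p\<bullet>q) + q\<bullet>q"
      by (simp add: power2_norm_eq_inner inner_diff inner_commute)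
    have e3: "(norm (U *v (p+q)))\<^sup>2 = (U *v p)\<bullet>(U *v p) + 2*((U *v p)\<bullet>(U *v q)) + (U *v q)\<bullet>(U *v q)"
      by (simp add: Uadd power2_norm_eq_inner inner_add inner_commute)
    have e4: "(norm (U *v (p-q)))\<^sup>2 = (U *v p)\<bullet>(U *v p) - 2*((U *v p)\<bullet>(U *v q)) + (U *v q)\<bullet>(U *v q)"
      by (simp add: Udiff power2_norm_eq_inner inner_diff inner_commute)
    have e5: "(norm p)\<^sup>2 = p \<bullet> p" "(norm q)\<^sup>2 = q \<bullet> q" by (simp_all add: power2_norm_eq_inner)
    show ?thesis using P[OF s1] P[OF s2] e1 e2 e3 e4 e5 by (simp add: abs_le_iff) argo
  qed
  show ?thesis
  proof (cases "u = 0 \<or> u' = 0")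
    case True thus ?thesis by auto
  next
    case False
    hence nu: "norm u > 0" "norm u' > 0" by auto
    define c where "c = sqrt (norm u' / norm u)"
    have c: "c > 0" "c^2 = norm u' / norm u" using nu by (auto simp: c_def)
    have "\<bar>(c *\<^sub>R u) \<bullet> ((1/c) *\<^sub>R u') - (U *v (c *\<^sub>R u)) \<bullet> (U *v ((1/c) *\<^sub>R u'))\<bar>
        \<le> \<delta> * ((norm (c *\<^sub>R u))\<^sup>2 + (norm ((1/c) *\<^sub>R u'))\<^sup>2) / 2"
      by (rule key) (use supp_scale su su' in blast)+
    moreover have "(c *\<^sub>R u) \<bullet> ((1/c) *\<^sub>R u') = u \<bullet> u'" using c by simp
    moreover have "(U *v (c *\<^sub>R u)) \<bullet> (U *v ((1/c) *\<^sub>R u')) = (U *v u) \<bullet> (U *v u')"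
      using c by (simp add: Uscale)
    moreover have "(norm (c *\<^sub>R u))\<^sup>2 = norm u * norm u'"
      using c nu by (simp add: power_mult_distrib power2_eq_square field_simps)
    moreover have "(norm ((1/c) *\<^sub>R u'))\<^sup>2 = norm u * norm u'"
    proof -
      have "(norm ((1/c) *\<^sub>R u'))\<^sup>2 = (norm u')\<^sup>2 / c^2"
        using c by (simp add: power_mult_distrib power_divide)
      also have "\<dots> = norm u * norm u'" using c nu by (simp add: power2_eq_square field_simps)
      finally show ?thesis .
    qed
    ultimately show ?thesis unfolding \<delta>_def by simp
  qed
qed

theorem corollary1:
  fixes U :: "real ^ 'd ^ 'n" and xs :: "real ^ 'd" and y :: "real ^ 'n"
    and s :: nat and x :: "nat \<Rightarrow> real ^ 'd" and lam :: "nat \<Rightarrow> real" and t :: nat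
  assumes s_pos: "s \<ge> 1"
    and s_dim: "2 * s \<le> CARD('d)"
    and sparse: "card (supp_vec xs) \<le> s"
    and y_def: "y = U *v xs"
    and lam_pos: "\<forall>k\<ge>1. lam k > 0"
    and x_init: "x 1 = 0"
    and x_iter: "\<forall>k\<ge>1. x (Suc k) = alg_step U y (lam k) (x k)"
    and t_ge: "t \<ge> 1"
    and hyp1: "card (supp_vec (x t) - supp_vec xs) \<le> s"
    and hyp2: "lam t \<ge> (rip_const U s + sqrt 2 * rop_const U s) / sqrt (real s) * norm (x t - xs)"
  shows "card (supp_vec (x (Suc t)) - supp_vec xs) \<le> s
    \<and> card (supp_vec xs \<union> supp_vec (x t) \<union> supp_vec (x (Suc t))) \<le> 3 * s"
proof -
  define S where "S = supp_vec xs"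
  define A where "A = supp_vec (x t) - S"
  define h where "h = x t - xs"
  define l where "l = lam t"
  define xh where "xh = x t - transpose U *v (U *v x t - y)"
  define \<delta> where "\<delta> = rip_const U s"
  define \<theta> where "\<theta> = rop_const U s"
  have l: "l > 0" using lam_pos t_ge by (simp add: l_def)
  have dpos: "\<delta> \<ge> 0" using rip_prop[of U s] by (simp add: \<delta>_def)
  have tpos: "\<theta> \<ge> 0" using rop_prop[of U s] by (simp add: \<theta>_def)
  have ROP: "\<And>T T' v v'. card T \<le> s \<Longrightarrow> card T' \<le> s \<Longrightarrow> T \<inter> T' = {} \<Longrightarrow>
        supp_vec v \<subseteq> T \<Longrightarrow> supp_vec v' \<subseteq> T' \<Longrightarrow>
        \<bar>(U *v v) \<bullet> (U *v v')\<bar> \<le> \<theta> * norm v * norm v'"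
    using rop_prop[of U s] unfolding \<theta>_def by blast
  have xnext: "x (Suc t) = (\<chi> i. sgn (xh $ i) * max (\<bar>xh $ i\<bar> - l) 0)"
    using x_iter t_ge by (simp add: alg_step_def xh_def l_def Let_def)
  have supp_next: "supp_vec (x (Suc t)) = {i. \<bar>xh $ i\<bar> > l}"
    using l by (auto simp: xnext supp_vec_def sgn_if split: if_splits)
  have xh_eq: "xh = h + xs - transpose U *v (U *v h)"
    by (simp add: xh_def h_def y_def Udiff)
  have cardS: "card S \<le> s" using sparse S_def by simp
  have cardA: "card A \<le> s" using hyp1 by (simp add: A_def S_def)
  have claim1: "card (supp_vec (x (Suc t)) - S) \<le> s"
  proof (rule ccontr)
    assume "\<not> ?thesis"
    hence "s \<le> card (supp_vec (x (Suc t)) - S)" by simp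
    then obtain T where T: "T \<subseteq> supp_vec (x (Suc t)) - S" "card T = s"
      using obtain_subset_with_card_n by blast
    have fT: "finite T" by simp
    have Tne: "T \<noteq> {}" using T s_pos by auto
    have Tbig: "\<And>i. i \<in> T \<Longrightarrow> \<bar>xh $ i\<bar> > l" using T supp_next by auto
    define v where "v = rs T xh"
    have vv: "v \<bullet> v = (\<Sum>i\<in>T. (xh $ i)^2)"
      unfolding v_def rs_def inner_vec_def
      by (simp add: if_distrib power2_eq_square sum.If_cases)
    have "(\<Sum>i\<in>T. l^2) < (\<Sum>i\<in>T. (xh $ i)^2)"
    proof (rule sum_strict_mono[OF fT Tne])
      fix i assume "i \<in> T"
      hence "l < \<bar>xh $ i\<bar>" by (rule Tbig)
      from power_strict_mono[OF this _ , of 2] l have "l^2 < \<bar>xh $ i\<bar>^2" by simp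
      thus "l^2 < (xh $ i)^2" by simp
    qed
    hence big: "v \<bullet> v > real s * l^2" using T(2) vv by simp
    have vxh: "v \<bullet> xh = v \<bullet> v"
      unfolding v_def rs_def inner_vec_def by (intro sum.cong) auto
    have suppv: "supp_vec v \<subseteq> T" unfolding v_def by (rule supp_rs)
    have TS: "T \<inter> S = {}" using T by blast
    have vxs: "v \<bullet> xs = 0" using suppv TS by (intro inner_disj) (auto simp: S_def)
    have vU: "v \<bullet> (transpose U *v w) = (U *v v) \<bullet> w" for w
      using dot_lmul_matrix[of w U v] by (simp add: inner_commute)
    have e1: "v \<bullet> v = v \<bullet> h - (U *v v) \<bullet> (U *v h)"
      using vxh vxs vU[of "U *v h"] by (simp add: xh_eq inner_add inner_diff)
    define h1 where "h1 = rs S h"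
    define h2 where "h2 = rs (-S) h"
    have hsplit: "h = h1 + h2" by (simp add: h1_def h2_def rs_split)
    have sh1: "supp_vec h1 \<subseteq> S" unfolding h1_def by (rule supp_rs)
    have sh2: "supp_vec h2 \<subseteq> A"
      by (auto simp: h2_def rs_def supp_vec_def A_def S_def h_def)
    have h12: "h1 \<bullet> h2 = 0" by (rule inner_disj) (use sh1 sh2 A_def in blast)
    have vh1: "v \<bullet> h1 = 0" by (rule inner_disj) (use sh1 suppv TS in blast)
    define va where "va = rs A v"
    define vb where "vb = rs (-A) v"
    have vsplit: "v = va + vb" by (simp add: va_def vb_def rs_split)
    have sva: "supp_vec va \<subseteq> A" unfolding va_def by (rule supp_rs)
    have svb: "supp_vec vb \<subseteq> T - A"
      using supp_rs[of "-A" v] supp_rs2[of "-A" v] suppv unfolding vb_def by blast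
    have vbh2: "vb \<bullet> h2 = 0" by (rule inner_disj) (use sh2 svb in blast)
    have e2: "v \<bullet> v = (va \<bullet> h2 - (U *v va) \<bullet> (U *v h2)) - (U *v vb) \<bullet> (U *v h2) - (U *v v) \<bullet> (U *v h1)"
      using e1 vh1 vbh2 unfolding hsplit
      by (simp add: inner_add Uadd vsplit algebra_simps)
    have b1: "\<bar>va \<bullet> h2 - (U *v va) \<bullet> (U *v h2)\<bar> \<le> \<delta> * norm va * norm h2"
      unfolding \<delta>_def by (rule rip_inner[OF cardA sva sh2])
    have cTA: "card (T - A) \<le> s" using T(2) by (metis card_Diff_subset_Int card_mono Diff_subset finite) 
    have b2: "\<bar>(U *v vb) \<bullet> (U *v h2)\<bar> \<le> \<theta> * norm vb * norm h2"
      by (rule ROP[OF cTA cardA _ svb sh2]) blast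
    have b3: "\<bar>(U *v v) \<bullet> (U *v h1)\<bar> \<le> \<theta> * norm v * norm h1"
      by (rule ROP[OF _ cardS TS suppv sh1]) (simp add: T(2))
    have nva: "norm va \<le> norm v" unfolding va_def by (rule norm_rs_le)
    have nvb: "norm vb \<le> norm v" unfolding vb_def by (rule norm_rs_le)
    have "\<delta> * norm va * norm h2 \<le> \<delta> * norm v * norm h2"
      using dpos nva by (intro mult_right_mono mult_left_mono) auto
    moreover have "\<theta> * norm vb * norm h2 \<le> \<theta> * norm v * norm h2"
      using tpos nvb by (intro mult_right_mono mult_left_mono) auto
    ultimately have "v \<bullet> v \<le> norm v * (\<delta> * norm h2 + \<theta> * (norm h1 + norm h2))"
      using e2 b1 b2 b3 by (simp add: algebra_simps abs_le_iff)
    moreover have "norm h2 \<le> norm h" unfolding h2_def by (rule norm_rs_le)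
    moreover have "norm h1 + norm h2 \<le> sqrt 2 * norm h"
    proof -
      have pyth: "(norm h)^2 = (norm h1)^2 + (norm h2)^2"
        unfolding hsplit by (rule norm_add_Pythagorean) (simp add: orthogonal_def h12)
      have "(norm h1 + norm h2)^2 \<le> 2 * (norm h)^2"
        unfolding pyth using zero_le_power2[of "norm h1 - norm h2"]
        by (simp add: power2_eq_square algebra_simps)
      hence "norm h1 + norm h2 \<le> sqrt (2 * (norm h)^2)" by (rule real_le_rsqrt)
      thus ?thesis by (simp add: real_sqrt_mult)
    qed
    ultimately have "v \<bullet> v \<le> norm v * ((\<delta> + sqrt 2 * \<theta>) * norm h)"
    proof -
      assume a: "v \<bullet> v \<le> norm v * (\<delta> * norm h2 + \<theta> * (norm h1 + norm h2))"
        and b: "norm h2 \<le> norm h" and c: "norm h1 + norm h2 \<le> sqrt 2 * norm h"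
      have "\<delta> * norm h2 + \<theta> * (norm h1 + norm h2) \<le> \<delta> * norm h + \<theta> * (sqrt 2 * norm h)"
        using dpos tpos b c by (intro add_mono mult_left_mono) auto
      hence "norm v * (\<delta> * norm h2 + \<theta> * (norm h1 + norm h2)) \<le> norm v * ((\<delta> + sqrt 2 * \<theta>) * norm h)"
        by (intro mult_left_mono) (auto simp: algebra_simps)
      thus ?thesis using a by linarith
    qed
    moreover have "(\<delta> + sqrt 2 * \<theta>) * norm h \<le> sqrt (real s) * l"
    proof -
      have sp: "sqrt (real s) > 0" using s_pos by simp
      have "(\<delta> + sqrt 2 * \<theta>) / sqrt (real s) * norm h \<le> l"
        using hyp2 by (simp add: l_def \<delta>_def \<theta>_def h_def)
      thus ?thesis using sp by (simp add: field_simps)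
    qed
    ultimately have "(norm v)^2 \<le> norm v * (sqrt (real s) * l)"
      by (smt (verit) mult_left_mono norm_ge_zero power2_norm_eq_inner)
    hence "norm v \<le> sqrt (real s) * l"
      by (smt (verit) mult_le_cancel_left_pos power2_eq_square norm_ge_zero mult_nonneg_nonneg
          real_sqrt_ge_zero l of_nat_0_le_iff)
    hence "(norm v)^2 \<le> (sqrt (real s) * l)^2" by (intro power_mono) auto
    hence "v \<bullet> v \<le> real s * l^2" by (simp add: power2_norm_eq_inner power_mult_distrib)
    thus False using big by simp
  qed
  have "supp_vec xs \<union> supp_vec (x t) \<union> supp_vec (x (Suc t)) = S \<union> A \<union> (supp_vec (x (Suc t)) - S)"
    by (auto simp: S_def A_def)
  moreover have "card (S \<union> A \<union> (supp_vec (x (Suc t)) - S)) \<le> card S + card A + card (supp_vec (x (Suc t)) - S)"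
    by (meson card_Un_le add_le_mono1 order_trans)
  ultimately show ?thesis using claim1 cardS cardA by (simp add: S_def)
qed

end
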